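(* Let $\theta\ge1$, let $G = (\mu,\mathcal{V},\mathcal{W},\mathcal{E})$ be a non-trivial weighted bipartite graph and let $G'$ be a subgraph of $G$ such that $\mu^{(\theta)}(G')>\mu^{(\theta)}(G)$. Then \[ \delta(G')>\delta(G) \quad\text{and}\quad \frac{\mu^{(\theta')}(G')}{\mu^{(\theta')}(G)} \ge \frac{\mu^{(\theta)}(G')}{\mu^{(\theta)}(G)} >1 \quad\text{for all}\ \theta'\ge\theta. \]
   Context: A weighted bipartite graph is $G=(\mu,\mathcal{V},\mathcal{W},\mathcal{E})$ with $\mu:\mathbb{R}_{>0}\to\mathbb{R}_{>0}$, $\mathcal{V},\mathcal{W}$ finite sets of positive reals, $\mathcal{E}\subseteq\mathcal{V}\times\mathcal{W}$; it is non-trivial if $\mathcal{E}\neq\emptyset$. $\mu(\mathcal{T})=\sum_{t\in\mathcal{T}}\mu(t)$ and $\mu(\mathcal{E})=\sum_{(v,w)\in\mathcal{E}}\mu(v)\mu(w)$. Edge density $\delta(G)=\mu(\mathcal{E})/(\mu(\mathcal{V})\mu(\mathcal{W}))$ if $G$ is non-trivial, else $0$. For $\theta\ge1$, $\mu^{(\theta)}(G)=\delta(G)^\theta\mu(\mathcal{V})\mu(\mathcal{W})$. A subgraph of $G$ is $(\mu,\mathcal{V}',\mathcal{W}',\mathcal{E}')$ with $\mathcal{V}'\subseteq\mathcal{V}$, $\mathcal{W}'\subseteq\mathcal{W}$, $\mathcal{E}'\subseteq\mathcal{E}\cap(\mathcal{V}'\times\mathcal{W}')$. *)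

theory Defs
  imports Complex_Main
begin

type_synonym wbgraph = "(real \<Rightarrow> real) \<times> real set \<times> real set \<times> (real \<times> real) set"

definition wbg_mu :: "wbgraph \<Rightarrow> (real \<Rightarrow> real)" where "wbg_mu G = fst G"
definition wbg_V :: "wbgraph \<Rightarrow> real set" where "wbg_V G = fst (snd G)"
definition wbg_W :: "wbgraph \<Rightarrow> real set" where "wbg_W G = fst (snd (snd G))"
definition wbg_E :: "wbgraph \<Rightarrow> (real \<times> real) set" where "wbg_E G = snd (snd (snd G))"

definition is_wbg :: "wbgraph \<Rightarrow> bool" where
  "is_wbg G \<longleftrightarrow>
     (\<forall>t>0. wbg_mu G t > 0) \<and>
     finite (wbg_V G) \<and> finite (wbg_W G) \<and>
     (\<forall>v\<in>wbg_V G. v > 0) \<and> (\<forall>w\<in>wbg_W G. w > 0) \<and>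
     wbg_E G \<subseteq> wbg_V G \<times> wbg_W G"

definition nontrivial :: "wbgraph \<Rightarrow> bool" where
  "nontrivial G \<longleftrightarrow> wbg_E G \<noteq> {}"

definition mu_set :: "(real \<Rightarrow> real) \<Rightarrow> real set \<Rightarrow> real" where
  "mu_set \<mu> T = (\<Sum>t\<in>T. \<mu> t)"

definition mu_edges :: "(real \<Rightarrow> real) \<Rightarrow> (real \<times> real) set \<Rightarrow> real" where
  "mu_edges \<mu> E = (\<Sum>(v,w)\<in>E. \<mu> v * \<mu> w)"

definition density :: "wbgraph \<Rightarrow> real" where
  "density G = (if nontrivial G
     then mu_edges (wbg_mu G) (wbg_E G) /
          (mu_set (wbg_mu G) (wbg_V G) * mu_set (wbg_mu G) (wbg_W G))
     else 0)"

definition mu_theta :: "real \<Rightarrow> wbgraph \<Rightarrow> real" where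
  "mu_theta \<theta> G = density G powr \<theta> * mu_set (wbg_mu G) (wbg_V G) * mu_set (wbg_mu G) (wbg_W G)"

definition is_subgraph :: "wbgraph \<Rightarrow> wbgraph \<Rightarrow> bool" where
  "is_subgraph G' G \<longleftrightarrow>
     wbg_mu G' = wbg_mu G \<and> wbg_V G' \<subseteq> wbg_V G \<and> wbg_W G' \<subseteq> wbg_W G \<and>
     wbg_E G' \<subseteq> wbg_E G \<inter> (wbg_V G' \<times> wbg_W G')"

end

theory Submission
  imports Defs
begin

theorem lemma5p6:
  fixes \<theta> :: real and G G' :: wbgraph
  assumes "\<theta> \<ge> 1"
    and "is_wbg G" and "nontrivial G"
    and "is_subgraph G' G"
    and "mu_theta \<theta> G' > mu_theta \<theta> G"
  shows "density G' > density G \<and>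
         (\<forall>\<theta>'\<ge>\<theta>. mu_theta \<theta>' G' / mu_theta \<theta>' G \<ge> mu_theta \<theta> G' / mu_theta \<theta> G
                  \<and> mu_theta \<theta> G' / mu_theta \<theta> G > 1)"
proof -
  define m where "m = wbg_mu G"
  define V where "V = wbg_V G"
  define W where "W = wbg_W G"
  define E where "E = wbg_E G"
  define V' where "V' = wbg_V G'"
  define W' where "W' = wbg_W G'"
  define E' where "E' = wbg_E G'"
  have mpos: "\<And>t. t > 0 \<Longrightarrow> m t > 0" and fV: "finite V" and fW: "finite W"
    and Vp: "\<forall>v\<in>V. v > 0" and Wp: "\<forall>w\<in>W. w > 0" and EVW: "E \<subseteq> V \<times> W"
    using assms(2) unfolding is_wbg_def m_def V_def W_def E_def by auto
  have sub: "wbg_mu G' = m" "V' \<subseteq> V" "W' \<subseteq> W" "E' \<subseteq> E"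
    using assms(4) unfolding is_subgraph_def m_def V_def W_def E_def V'_def W'_def E'_def by auto
  have Ene: "E \<noteq> {}" using assms(3) unfolding nontrivial_def E_def .
  have fE: "finite E" using EVW fV fW finite_subset by blast
  obtain v w where vw: "(v,w) \<in> E" using Ene by auto
  have Vne: "V \<noteq> {}" and Wne: "W \<noteq> {}" using vw EVW by auto
  have muV: "mu_set m V > 0" unfolding mu_set_def
    using fV Vne Vp mpos by (intro sum_pos) auto
  have muW: "mu_set m W > 0" unfolding mu_set_def
    using fW Wne Wp mpos by (intro sum_pos) auto
  have muV': "mu_set m V' \<ge> 0" unfolding mu_set_def
    using sub(2) Vp mpos by (intro sum_nonneg) (meson less_imp_le subsetD)
  have muW': "mu_set m W' \<ge> 0" unfolding mu_set_def
    using sub(3) Wp mpos by (intro sum_nonneg) (meson less_imp_le subsetD)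
  have epos: "\<And>x. x \<in> E \<Longrightarrow> (case x of (v,w) \<Rightarrow> m v * m w) > 0"
    using EVW Vp Wp mpos by auto
  have muE: "mu_edges m E > 0" unfolding mu_edges_def
    using fE Ene epos by (intro sum_pos) auto
  have muE': "mu_edges m E' \<le> mu_edges m E" unfolding mu_edges_def
    using fE sub(4) epos by (intro sum_mono2) (auto intro: less_imp_le)
  have muE'0: "mu_edges m E' \<ge> 0" unfolding mu_edges_def
    using sub(4) epos by (intro sum_nonneg) (auto intro: less_imp_le)
  define a where "a = mu_set m V * mu_set m W"
  define a' where "a' = mu_set m V' * mu_set m W'"
  define d where "d = density G"
  define d' where "d' = density G'"
  have apos: "a > 0" using muV muW a_def by simp
  have a'nn: "a' \<ge> 0" using muV' muW' a'_def by simp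
  have dG: "d = mu_edges m E / a"
    using assms(3) unfolding d_def density_def a_def m_def V_def W_def E_def by simp
  have dpos: "d > 0" using dG muE apos by simp
  have d'nn: "d' \<ge> 0" unfolding d'_def density_def
    using sub(1) muE'0 muV' muW' by (simp add: E'_def V'_def W'_def)
  have mt: "\<And>t. mu_theta t G = d powr t * a"
    unfolding mu_theta_def d_def a_def m_def V_def W_def by simp
  have mt': "\<And>t. mu_theta t G' = d' powr t * a'"
    unfolding mu_theta_def d'_def a'_def V'_def W'_def using sub(1) by simp
  have hyp: "d' powr \<theta> * a' > d powr \<theta> * a" using assms(5) mt mt' by simp
  have pos0: "d powr \<theta> * a > 0" using dpos apos by simp
  have d'pos: "d' > 0"
  proof (rule ccontr)
    assume "\<not> d' > 0" then have "d' = 0" using d'nn by simp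
    then show False using hyp pos0 by simp
  qed
  have a'pos: "a' > 0"
  proof (rule ccontr)
    assume "\<not> a' > 0" then have "a' = 0" using a'nn by simp
    then show False using hyp pos0 by simp
  qed
  have ntG': "nontrivial G'"
    using d'pos unfolding d'_def density_def by (auto split: if_splits)
  have d'G: "d' = mu_edges m E' / a'"
    using ntG' sub(1) unfolding d'_def density_def a'_def E'_def V'_def W'_def by simp
  have key: "d' * a' \<le> d * a" using d'G dG a'pos apos muE' by simp
  have dgt: "d' > d"
  proof (rule ccontr)
    assume "\<not> d' > d" then have le: "d' \<le> d" by simp
    have p1: "d' powr (\<theta> - 1) \<le> d powr (\<theta> - 1)"
      using le d'pos assms(1) by (intro powr_mono2) auto
    have e1: "d' powr \<theta> = d' powr (\<theta> - 1) * d'"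
      using d'pos by (simp add: powr_diff)
    have e2: "d powr \<theta> = d powr (\<theta> - 1) * d"
      using dpos by (simp add: powr_diff)
    have "d' powr \<theta> * a' = d' powr (\<theta> - 1) * (d' * a')" using e1 by simp
    also have "\<dots> \<le> d powr (\<theta> - 1) * (d * a)"
      using mult_mono[OF p1 key] d'pos a'pos dpos apos by simp
    also have "\<dots> = d powr \<theta> * a" using e2 by simp
    finally show False using hyp by simp
  qed
  have R1: "mu_theta \<theta> G' / mu_theta \<theta> G > 1" using hyp pos0 mt mt' by simp
  have R2: "mu_theta t G' / mu_theta t G \<ge> mu_theta \<theta> G' / mu_theta \<theta> G" if t: "t \<ge> \<theta>" for t
  proof -
    have q: "d' powr (t - \<theta>) \<ge> d powr (t - \<theta>)"
      using dgt dpos t by (intro powr_mono2) auto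
    have qp: "d powr (t - \<theta>) > 0" using dpos by simp
    have f1: "d' powr t = d' powr \<theta> * d' powr (t - \<theta>)"
      using d'pos by (simp add: powr_add[symmetric])
    have f2: "d powr t = d powr \<theta> * d powr (t - \<theta>)"
      using dpos by (simp add: powr_add[symmetric])
    define P' where "P' = d' powr \<theta> * a'"
    define P where "P = d powr \<theta> * a"
    have Pp: "P > 0" "P' > 0" using pos0 hyp unfolding P_def P'_def by auto
    have "mu_theta t G' / mu_theta t G = (P' * d' powr (t - \<theta>)) / (P * d powr (t - \<theta>))"
      unfolding mt mt' f1 f2 P_def P'_def by (simp add: ac_simps)
    also have "\<dots> \<ge> P' / P"
      using Pp q qp by (simp add: divide_simps mult_left_mono)
    finally show ?thesis unfolding mt mt' P_def P'_def by simp
  qed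
  show ?thesis using dgt R1 R2 unfolding d_def d'_def by blast
qed

end
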